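(* Let $\mathcal T$ be an orbital category and $\mathcal C$ a $\mathcal T$-weak indexing system. Then $\mathcal C$ is almost essentially unital if and only if, whenever $S\in\mathcal C_V$ is not isomorphic to $*_V$, we have $V\in\upsilon(\mathcal C)$.
   Context: For a small category $\mathcal T$, $\mathbb F_{\mathcal T}$ is the full subcategory of $\mathrm{Fun}(\mathcal T^{op},\mathrm{Set})$ on finite coproducts of representables; $\mathcal T$ is orbital if $\mathbb F_{\mathcal T}$ has pullbacks. $\mathbb F_V:=\mathbb F_{\mathcal T,/V}$, $*_V$ terminal, $\emptyset_V$ initial; for $U\to V$ in $\mathcal T$, $\mathrm{Res}^V_U$ is pullback and $\mathrm{Ind}^V_U$ postcomposition. A full $\mathcal T$-subcategory $\mathcal C$ assigns isomorphism-closed classes $\mathcal C_V\subseteq\mathrm{Ob}\,\mathbb F_V$ stable under all restrictions. For $S\in\mathbb F_V$ with orbits $U\in\mathrm{Orb}(S)$ and $T_U\in\mathbb F_U$, $\coprod_U^ST_U:=\coprod_U\mathrm{Ind}_U^VT_U$. A $\mathcal T$-weak indexing system is a full $\mathcal T$-subcategory $\mathcal C$ with $\mathcal C_V\neq\emptyset\Rightarrow *_V\in\mathcal C_V$ and closed under $\coprod^S_U T_U$ for $S\in\mathcal C_V$, $T_U\in\mathcal C_U$. It is almost essentially unital if whenever $S\sqcup S'\in\mathcal C_V$ is not isomorphic to $*_V$, we have $S,S'\in\mathcal C_V$. $\upsilon(\mathcal C)=\{V\mid\emptyset_V\in\mathcal C_V\}$. *)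

theory Defs
  imports Main
begin

text \<open>A small category T, given by a set of objects, hom-sets, composition
  (cmp g f = g after f) and identities.\<close>
record ('o,'m) cat =
  Ob  :: "'o set"
  Hom :: "'o \<Rightarrow> 'o \<Rightarrow> 'm set"
  cmp :: "'m \<Rightarrow> 'm \<Rightarrow> 'm"
  idt :: "'o \<Rightarrow> 'm"

definition category :: "('o,'m) cat \<Rightarrow> bool" where
  "category T \<longleftrightarrow>
     (\<forall>x\<in>Ob T. idt T x \<in> Hom T x x) \<and>
     (\<forall>x\<in>Ob T. \<forall>y\<in>Ob T. \<forall>z\<in>Ob T. \<forall>f g. f \<in> Hom T x y \<and> g \<in> Hom T y z
          \<longrightarrow> cmp T g f \<in> Hom T x z) \<and>
     (\<forall>x\<in>Ob T. \<forall>y\<in>Ob T. \<forall>f\<in>Hom T x y. cmp T f (idt T x) = f \<and> cmp T (idt T y) f = f) \<and>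
     (\<forall>w\<in>Ob T. \<forall>x\<in>Ob T. \<forall>y\<in>Ob T. \<forall>z\<in>Ob T. \<forall>f g h.
          f \<in> Hom T w x \<and> g \<in> Hom T x y \<and> h \<in> Hom T y z
          \<longrightarrow> cmp T h (cmp T g f) = cmp T (cmp T h g) f)"

text \<open>The category F_T of finite coproducts of representables (finite coproduct
  completion of T).  An object is a finite list [U_0,..,U_{n-1}] of objects of T,
  standing for the coproduct of the representables y(U_i).  By Yoneda, a morphism
  from the coproduct of the y(U_i) to the coproduct of the y(W_j) is a pair (phi, alpha)
  with phi i < length of target and alpha i : U_i -> W_{phi i}; two such pairs are
  equal iff they agree on all indices i < length of the source.\<close>
type_synonym 'm fmor = "(nat \<Rightarrow> nat) \<times> (nat \<Rightarrow> 'm)"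

definition F_obj :: "('o,'m) cat \<Rightarrow> 'o list \<Rightarrow> bool" where
  "F_obj T xs \<longleftrightarrow> set xs \<subseteq> Ob T"

definition F_hom :: "('o,'m) cat \<Rightarrow> 'o list \<Rightarrow> 'o list \<Rightarrow> 'm fmor \<Rightarrow> bool" where
  "F_hom T xs ys m \<longleftrightarrow>
     (\<forall>i<length xs. fst m i < length ys \<and> snd m i \<in> Hom T (xs!i) (ys!(fst m i)))"

definition F_comp :: "('o,'m) cat \<Rightarrow> 'm fmor \<Rightarrow> 'm fmor \<Rightarrow> 'm fmor" where
  "F_comp T n m = (fst n \<circ> fst m, \<lambda>i. cmp T (snd n (fst m i)) (snd m i))"

definition F_id :: "('o,'m) cat \<Rightarrow> 'o list \<Rightarrow> 'm fmor" where
  "F_id T xs = (id, \<lambda>i. idt T (xs!i))"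

definition F_eq :: "'o list \<Rightarrow> 'm fmor \<Rightarrow> 'm fmor \<Rightarrow> bool" where
  "F_eq xs m m' \<longleftrightarrow> (\<forall>i<length xs. fst m i = fst m' i \<and> snd m i = snd m' i)"

definition is_pullback ::
  "('o,'m) cat \<Rightarrow> 'o list \<Rightarrow> 'o list \<Rightarrow> 'o list \<Rightarrow> 'm fmor \<Rightarrow> 'm fmor
     \<Rightarrow> 'o list \<Rightarrow> 'm fmor \<Rightarrow> 'm fmor \<Rightarrow> bool" where
  "is_pullback T xs ys zs f g ps p1 p2 \<longleftrightarrow>
     F_obj T ps \<and> F_hom T ps xs p1 \<and> F_hom T ps ys p2 \<and>
     F_eq ps (F_comp T f p1) (F_comp T g p2) \<and>
     (\<forall>qs q1 q2. F_obj T qs \<and> F_hom T qs xs q1 \<and> F_hom T qs ys q2 \<and>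
        F_eq qs (F_comp T f q1) (F_comp T g q2) \<longrightarrow>
        (\<exists>h. F_hom T qs ps h \<and> F_eq qs (F_comp T p1 h) q1 \<and> F_eq qs (F_comp T p2 h) q2 \<and>
           (\<forall>h'. F_hom T qs ps h' \<and> F_eq qs (F_comp T p1 h') q1 \<and> F_eq qs (F_comp T p2 h') q2
              \<longrightarrow> F_eq qs h h')))"

definition orbital :: "('o,'m) cat \<Rightarrow> bool" where
  "orbital T \<longleftrightarrow>
     (\<forall>xs ys zs f g. F_obj T xs \<and> F_obj T ys \<and> F_obj T zs \<and>
        F_hom T xs zs f \<and> F_hom T ys zs g \<longrightarrow> (\<exists>ps p1 p2. is_pullback T xs ys zs f g ps p1 p2))"

text \<open>The slice F_V = F_T / y(V).  An object is a list of pairs (U_i, a_i) with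
  a_i : U_i -> V (the structure map restricted to the i-th orbit).\<close>
definition FV_obj :: "('o,'m) cat \<Rightarrow> 'o \<Rightarrow> ('o \<times> 'm) list \<Rightarrow> bool" where
  "FV_obj T V S \<longleftrightarrow> (\<forall>p\<in>set S. fst p \<in> Ob T \<and> snd p \<in> Hom T (fst p) V)"

definition FV_hom :: "('o,'m) cat \<Rightarrow> 'o \<Rightarrow> ('o \<times> 'm) list \<Rightarrow> ('o \<times> 'm) list \<Rightarrow> 'm fmor \<Rightarrow> bool" where
  "FV_hom T V S S' m \<longleftrightarrow> F_hom T (map fst S) (map fst S') m \<and>
     (\<forall>i<length S. cmp T (snd (S'!(fst m i))) (snd m i) = snd (S!i))"

definition FV_iso :: "('o,'m) cat \<Rightarrow> 'o \<Rightarrow> ('o \<times> 'm) list \<Rightarrow> ('o \<times> 'm) list \<Rightarrow> bool" where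
  "FV_iso T V S S' \<longleftrightarrow> (\<exists>f g. FV_hom T V S S' f \<and> FV_hom T V S' S g \<and>
     F_eq (map fst S) (F_comp T g f) (F_id T (map fst S)) \<and>
     F_eq (map fst S') (F_comp T f g) (F_id T (map fst S')))"

definition star :: "('o,'m) cat \<Rightarrow> 'o \<Rightarrow> ('o \<times> 'm) list" where
  "star T V = [(V, idt T V)]"

definition empt :: "('o \<times> 'm) list" where
  "empt = []"

definition struct_map :: "('o \<times> 'm) list \<Rightarrow> 'm fmor" where
  "struct_map S = (\<lambda>_. 0, \<lambda>i. snd (S!i))"

text \<open>Full T-subcategory: iso-closed classes C_V of objects of F_V, stable under
  restriction along every u : U -> V (restriction = pullback along y(u); since the
  classes are iso-closed we require membership for every pullback).\<close>
definition full_T_subcat :: "('o,'m) cat \<Rightarrow> ('o \<Rightarrow> ('o \<times> 'm) list set) \<Rightarrow> bool" where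
  "full_T_subcat T C \<longleftrightarrow>
     (\<forall>V\<in>Ob T. \<forall>S\<in>C V. FV_obj T V S) \<and>
     (\<forall>V\<in>Ob T. \<forall>S S'. S \<in> C V \<and> FV_obj T V S' \<and> FV_iso T V S S' \<longrightarrow> S' \<in> C V) \<and>
     (\<forall>U\<in>Ob T. \<forall>V\<in>Ob T. \<forall>u\<in>Hom T U V. \<forall>S\<in>C V. \<forall>ps p1 p2.
        is_pullback T (map fst S) [U] [V] (struct_map S) (\<lambda>_. 0, \<lambda>_. u) ps p1 p2
        \<longrightarrow> zip ps (map (snd p2) [0..<length ps]) \<in> C U)"

text \<open>Induction along u : U -> V (postcomposition) and the indexed coproduct
  of T_U over the orbits U of S (orbits indexed by position in S).\<close>
definition Ind :: "('o,'m) cat \<Rightarrow> 'm \<Rightarrow> ('o \<times> 'm) list \<Rightarrow> ('o \<times> 'm) list" where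
  "Ind T u S = map (\<lambda>(W, b). (W, cmp T u b)) S"

definition indexed_coprod ::
  "('o,'m) cat \<Rightarrow> ('o \<times> 'm) list \<Rightarrow> (nat \<Rightarrow> ('o \<times> 'm) list) \<Rightarrow> ('o \<times> 'm) list" where
  "indexed_coprod T S Tf = concat (map (\<lambda>i. Ind T (snd (S!i)) (Tf i)) [0..<length S])"

definition weak_indexing_system :: "('o,'m) cat \<Rightarrow> ('o \<Rightarrow> ('o \<times> 'm) list set) \<Rightarrow> bool" where
  "weak_indexing_system T C \<longleftrightarrow> full_T_subcat T C \<and>
     (\<forall>V\<in>Ob T. C V \<noteq> {} \<longrightarrow> star T V \<in> C V) \<and>
     (\<forall>V\<in>Ob T. \<forall>S\<in>C V. \<forall>Tf. (\<forall>i<length S. Tf i \<in> C (fst (S!i)))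
        \<longrightarrow> indexed_coprod T S Tf \<in> C V)"

text \<open>S \<squnion> S' in F_V is the concatenation S @ S'.\<close>
definition almost_essentially_unital :: "('o,'m) cat \<Rightarrow> ('o \<Rightarrow> ('o \<times> 'm) list set) \<Rightarrow> bool" where
  "almost_essentially_unital T C \<longleftrightarrow>
     (\<forall>V\<in>Ob T. \<forall>S S'. FV_obj T V S \<and> FV_obj T V S' \<and> S @ S' \<in> C V \<and>
        \<not> FV_iso T V (S @ S') (star T V) \<longrightarrow> S \<in> C V \<and> S' \<in> C V)"

definition upsilon :: "('o,'m) cat \<Rightarrow> ('o \<Rightarrow> ('o \<times> 'm) list set) \<Rightarrow> 'o set" where
  "upsilon T C = {V \<in> Ob T. empt \<in> C V}"

end

theory Submission
  imports Defs
begin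

lemma concat_single_nth: "concat (map (\<lambda>i. [f i]) xs) = map f xs"
  by (induction xs) auto

lemma F_hom_nil: "F_hom T qs [] q \<Longrightarrow> qs = []"
  unfolding F_hom_def by (cases qs) auto
lemma pb_nil: "u \<in> Hom T U V \<Longrightarrow> is_pullback T (map fst []) [U] [V] (struct_map []) (\<lambda>_. 0, \<lambda>_. u) [] (\<lambda>_. 0, \<lambda>_. u) (\<lambda>_. 0, \<lambda>_. u)"
  unfolding is_pullback_def
proof (intro conjI allI impI)
  fix qs q1 q2
  assume "F_obj T qs \<and> F_hom T qs (map fst []) q1 \<and> F_hom T qs [U] q2 \<and>
       F_eq qs (F_comp T (struct_map []) q1) (F_comp T (\<lambda>_. 0, \<lambda>_. u) q2)"
  then have "qs = []" using F_hom_nil by (metis list.simps(8))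
  then show "\<exists>h. F_hom T qs [] h \<and>
           F_eq qs (F_comp T (\<lambda>_. 0, \<lambda>_. u) h) q1 \<and>
           F_eq qs (F_comp T (\<lambda>_. 0, \<lambda>_. u) h) q2 \<and>
           (\<forall>h'. F_hom T qs [] h' \<and>
                  F_eq qs (F_comp T (\<lambda>_. 0, \<lambda>_. u) h') q1 \<and>
                  F_eq qs (F_comp T (\<lambda>_. 0, \<lambda>_. u) h') q2 \<longrightarrow>
                  F_eq qs h h')" by (simp add: F_hom_def F_eq_def)
qed (simp_all add: F_obj_def F_hom_def F_eq_def)

lemma empty_in_restr:
  assumes wis: "weak_indexing_system T C" and V: "V \<in> Ob T" and e: "[] \<in> C V"
    and U: "U \<in> Ob T" and u: "u \<in> Hom T U V"
  shows "[] \<in> C U"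
proof -
  have fs: "full_T_subcat T C" using wis unfolding weak_indexing_system_def by blast
  have pb: "is_pullback T (map fst []) [U] [V] (struct_map []) (\<lambda>_. 0, \<lambda>_. u) [] (\<lambda>_. 0, \<lambda>_. u) (\<lambda>_. 0, \<lambda>_. u)"
    using pb_nil[OF u] .
  have r: "\<forall>U\<in>Ob T. \<forall>V\<in>Ob T. \<forall>u\<in>Hom T U V. \<forall>S\<in>C V. \<forall>ps p1 p2.
        is_pullback T (map fst S) [U] [V] (struct_map S) (\<lambda>_. 0, \<lambda>_. u) ps p1 p2
        \<longrightarrow> zip ps (map (snd p2) [0..<length ps]) \<in> C U"
    using fs unfolding full_T_subcat_def by blast
  show ?thesis using r[rule_format, OF U V u e pb] by simp
qed

theorem mainTheorem7:
  fixes T :: "('o,'m) cat" and C :: "'o \<Rightarrow> ('o \<times> 'm) list set"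
  assumes "category T" and "orbital T" and "weak_indexing_system T C"
  shows "almost_essentially_unital T C \<longleftrightarrow>
    (\<forall>V\<in>Ob T. \<forall>S\<in>C V. \<not> FV_iso T V S (star T V) \<longrightarrow> V \<in> upsilon T C)"
proof
  have fs: "full_T_subcat T C" using assms(3) unfolding weak_indexing_system_def by blast
  assume aeu: "almost_essentially_unital T C"
  show "\<forall>V\<in>Ob T. \<forall>S\<in>C V. \<not> FV_iso T V S (star T V) \<longrightarrow> V \<in> upsilon T C"
  proof (intro ballI impI)
    fix V S assume V: "V \<in> Ob T" and S: "S \<in> C V" and ni: "\<not> FV_iso T V S (star T V)"
    have "FV_obj T V S" using fs V S unfolding full_T_subcat_def by blast
    moreover have "FV_obj T V []" unfolding FV_obj_def by simp
    moreover have "S @ [] \<in> C V" "\<not> FV_iso T V (S @ []) (star T V)" using S ni by simp_all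
    ultimately have "S \<in> C V \<and> [] \<in> C V" using aeu V unfolding almost_essentially_unital_def
      by blast
    then have "[] \<in> C V" by blast
    then show "V \<in> upsilon T C" using V unfolding upsilon_def empt_def by simp
  qed
next
  have fs: "full_T_subcat T C" using assms(3) unfolding weak_indexing_system_def by blast
  have st: "\<forall>V\<in>Ob T. C V \<noteq> {} \<longrightarrow> star T V \<in> C V" using assms(3) unfolding weak_indexing_system_def by blast
  have ic: "\<forall>V\<in>Ob T. \<forall>S\<in>C V. \<forall>Tf. (\<forall>i<length S. Tf i \<in> C (fst (S!i)))
        \<longrightarrow> indexed_coprod T S Tf \<in> C V" using assms(3) unfolding weak_indexing_system_def by blast
  have cat_id: "\<And>x y f. x \<in> Ob T \<Longrightarrow> y \<in> Ob T \<Longrightarrow> f \<in> Hom T x y \<Longrightarrow> cmp T f (idt T x) = f"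
    using assms(1) unfolding category_def by blast
  assume H: "\<forall>V\<in>Ob T. \<forall>S\<in>C V. \<not> FV_iso T V S (star T V) \<longrightarrow> V \<in> upsilon T C"
  show "almost_essentially_unital T C"
    unfolding almost_essentially_unital_def
  proof (intro ballI allI impI)
    fix V S S' assume V: "V \<in> Ob T" and h: "FV_obj T V S \<and> FV_obj T V S' \<and> S @ S' \<in> C V \<and>
        \<not> FV_iso T V (S @ S') (star T V)"
    let ?L = "S @ S'"
    have L: "?L \<in> C V" using h by blast
    have e: "[] \<in> C V" using H V h unfolding upsilon_def empt_def by blast
    have ob: "FV_obj T V ?L" using fs V L unfolding full_T_subcat_def by blast
    have orb: "\<And>i. i < length ?L \<Longrightarrow> fst (?L!i) \<in> Ob T \<and> snd (?L!i) \<in> Hom T (fst (?L!i)) V"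
      using ob unfolding FV_obj_def by (meson nth_mem)
    have eU: "\<And>i. i < length ?L \<Longrightarrow> [] \<in> C (fst (?L!i))"
      using empty_in_restr[OF assms(3) V e] orb by blast
    have sU: "\<And>i. i < length ?L \<Longrightarrow> star T (fst (?L!i)) \<in> C (fst (?L!i))"
      using st orb eU by (metis empty_iff)
    have indst: "\<And>i. i < length ?L \<Longrightarrow> Ind T (snd (?L!i)) (star T (fst (?L!i))) = [?L!i]"
      unfolding Ind_def star_def using cat_id orb V by (simp add: prod_eq_iff)
    have split: "[0..<length ?L] = [0..<length S] @ [length S..<length S + length S']"
      using upt_add_eq_append[of 0 "length S" "length S'"] by simp
    define Tf1 where "Tf1 i = (if i < length S then star T (fst (?L!i)) else [])" for i
    define Tf2 where "Tf2 i = (if i < length S then [] else star T (fst (?L!i)))" for i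
    have "\<forall>i<length ?L. Tf1 i \<in> C (fst (?L!i))" using eU sU unfolding Tf1_def by simp
    then have "indexed_coprod T ?L Tf1 \<in> C V"
      using ic V L by blast
    moreover have "indexed_coprod T ?L Tf1 = S"
    proof -
      have a: "map (\<lambda>i. Ind T (snd (?L!i)) (Tf1 i)) [0..<length S] = map (\<lambda>i. [S!i]) [0..<length S]"
      proof (rule map_cong[OF refl])
        fix i assume "i \<in> set [0..<length S]"
        then have i: "i < length S" by simp
        then have "i < length ?L" by simp
        from indst[OF this] i show "Ind T (snd (?L!i)) (Tf1 i) = [S!i]"
          by (simp add: Tf1_def nth_append)
      qed
      have b: "map (\<lambda>i. Ind T (snd (?L!i)) (Tf1 i)) [length S..<length S + length S'] =
               map (\<lambda>i. []) [length S..<length S + length S']"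
        unfolding Tf1_def Ind_def by auto
      show ?thesis unfolding indexed_coprod_def split map_append concat_append a b concat_single_nth
        by (simp add: map_nth)
    qed
    moreover have "\<forall>i<length ?L. Tf2 i \<in> C (fst (?L!i))" using eU sU unfolding Tf2_def by simp
    then have "indexed_coprod T ?L Tf2 \<in> C V"
      using ic V L by blast
    moreover have "indexed_coprod T ?L Tf2 = S'"
    proof -
      have a: "map (\<lambda>i. Ind T (snd (?L!i)) (Tf2 i)) [0..<length S] = map (\<lambda>i. []) [0..<length S]"
        unfolding Tf2_def Ind_def by auto
      have b: "map (\<lambda>i. Ind T (snd (?L!i)) (Tf2 i)) [length S..<length S + length S'] =
               map (\<lambda>i. [S'!(i - length S)]) [length S..<length S + length S']"
      proof (rule map_cong[OF refl])
        fix i assume "i \<in> set [length S..<length S + length S']"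
        then have i: "length S \<le> i" "i < length S + length S'" by simp_all
        then have "i < length ?L" by simp
        from indst[OF this] i show "Ind T (snd (?L!i)) (Tf2 i) = [S'!(i - length S)]"
          by (simp add: Tf2_def nth_append)
      qed
      have c: "map (\<lambda>i. S'!(i - length S)) [length S..<length S + length S'] = S'"
        by (rule nth_equalityI) auto
      show ?thesis unfolding indexed_coprod_def split map_append concat_append a b concat_single_nth c
        by simp
    qed
    ultimately show "S \<in> C V \<and> S' \<in> C V" by simp
  qed
qed

end
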